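(* Let $m$ be an odd integer and $a\in\mathbb{F}_{2^{3m}}^*$. The (APN) map $f:\mathbb{F}_{2^{3m}}\to\mathbb{F}_{2^{3m}}$ given by \[f(x)=x^3+a^{-1}\mathrm{Tr}_{2^{3m}/2^3}(a^3x^9+a^6x^{18})\] satisfies $M_1(f)=2^{3m-1}$ and $M_4(f)=2^{3m-3}$ (and $M_r(f)=0$ otherwise); in particular $|\mathrm{Im}(f)|=5\cdot 2^{3m-3}$.
   Context: $\mathrm{Tr}_{2^{3m}/2^3}(x)=\sum_{j=0}^{m-1}x^{8^j}$ is the trace map from $\mathbb{F}_{2^{3m}}$ onto $\mathbb{F}_8$. $M_r(f)$ is the number of $y\in\mathbb{F}_{2^{3m}}$ with exactly $r$ preimages under $f$. *)

theory Defs
  imports Main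
begin

definition trace8 :: "nat \<Rightarrow> 'a::field \<Rightarrow> 'a" where
  "trace8 m x = (\<Sum>j<m. x ^ (8 ^ j))"

definition Mcount :: "nat \<Rightarrow> ('a::finite \<Rightarrow> 'a) \<Rightarrow> nat" where
  "Mcount r f = card {y. card {x. f x = y} = r}"

end

theory Submission imports Defs "HOL-Computational_Algebra.Polynomial" begin

lemma c2_add_self: assumes "(2::'a::field) = 0" shows "(x::'a) + x = 0"
proof -
  have "x + x = 2 * x" by (simp only: mult_2)
  also have "\<dots> = 0" by (simp add: assms)
  finally show ?thesis .
qed

lemma c2_minus: assumes "(2::'a::field) = 0" shows "- (x::'a) = x"
  using c2_add_self[OF assms, of x] by (simp add: neg_eq_iff_add_eq_0)

lemma c2_diff: assumes "(2::'a::field) = 0" shows "(x::'a) - y = x + y"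
  using c2_minus[OF assms, of y] by (metis diff_conv_add_uminus)

lemma c2_sq: assumes "(2::'a::field) = 0" shows "((x::'a) + y)^2 = x^2 + y^2"
  using assms by (simp add: power2_sum)

lemma c2_pow2k: assumes "(2::'a::field) = 0" shows "((x::'a) + y)^(2^k) = x^(2^k) + y^(2^k)"
proof (induction k)
  case 0 then show ?case by simp
next
  case (Suc k)
  have "(x + y)^(2^Suc k) = ((x+y)^(2^k))^2" by (simp add: power_mult[symmetric] mult.commute)
  also have "\<dots> = (x^(2^k))^2 + (y^(2^k))^2" using Suc c2_sq[OF assms] by simp
  also have "\<dots> = x^(2^Suc k) + y^(2^Suc k)" by (simp add: power_mult[symmetric] mult.commute)
  finally show ?case .
qed

lemma c2_pow8: assumes "(2::'a::field) = 0" shows "((x::'a) + y)^(8^k) = x^(8^k) + y^(8^k)"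
proof -
  have "(8::nat)^k = 2^(3*k)" by (simp add: power_mult)
  thus ?thesis using c2_pow2k[OF assms] by simp
qed

lemma c2_pow8_sum: assumes "(2::'a::field) = 0" 
  shows "(\<Sum>i\<in>A. (g i::'a))^(8^k) = (\<Sum>i\<in>A. g i ^(8^k))"
proof (induction A rule: infinite_finite_induct)
  case (infinite A) then show ?case by simp
next
  case empty then show ?case by simp
next
  case (insert x F) then show ?case by (simp add: c2_pow8[OF assms])
qed

lemma c2_pow2_sum: assumes "(2::'a::field) = 0" 
  shows "(\<Sum>i\<in>A. (g i::'a))^2 = (\<Sum>i\<in>A. g i ^ 2)"
proof (induction A rule: infinite_finite_induct)
  case (infinite A) then show ?case by simp
next
  case empty then show ?case by simp
next
  case (insert x F) then show ?case by (simp add: c2_sq[OF assms])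
qed

lemma c2_odd: assumes "(2::'a::field) = 0" "odd n" shows "(of_nat n::'a) = 1"
proof -
  obtain k where "n = 2*k+1" using assms(2) oddE by blast
  thus ?thesis using assms(1) by simp
qed

lemma fermat_fin:
  assumes "card (UNIV::'a::{field,finite} set) = q"
  shows "(x::'a)^q = x"
proof (cases "x = 0")
  case True
  have "q > 0" using assms by (metis card_gt_0_iff finite_class.finite_UNIV UNIV_not_empty)
  then show ?thesis using True by simp
next
  case False
  let ?U = "UNIV - {0::'a}"
  have sub: "?U \<subseteq> (\<lambda>y. x*y) ` ?U"
  proof
    fix z assume z: "z \<in> ?U"
    show "z \<in> (\<lambda>y. x*y) ` ?U"
      by (rule image_eqI[of _ _ "inverse x * z"]) (use False z in auto)
  qed
  have bij: "bij_betw (\<lambda>y. x*y) ?U ?U"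
    unfolding bij_betw_def inj_on_def using False sub by auto
  have "prod id ?U = prod (id \<circ> (\<lambda>y. x*y)) ?U"
    using prod.reindex_bij_betw[OF bij, of id] by simp
  also have "\<dots> = x^card ?U * prod id ?U" by (simp add: prod.distrib)
  finally have eq: "prod id ?U = x^card ?U * prod id ?U" .
  have "prod id ?U \<noteq> 0" by simp
  hence "x^card ?U = 1" using eq by simp
  moreover have "card ?U = q - 1" using assms by (simp add: card_Diff_singleton)
  moreover have "q \<ge> 1"
  proof -
    have "q > 0" using assms by (metis card_gt_0_iff finite_class.finite_UNIV UNIV_not_empty)
    thus ?thesis by simp
  qed
  ultimately have h: "x^(q-1) = 1" "q = Suc (q - 1)" by auto
  have "x^q = x * x^(q-1)" by (subst h(2)) simp
  thus ?thesis using h(1) by simp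
qed

locale P54 =
  fixes m :: nat and T :: "'a::{field,finite} \<Rightarrow> 'a"
  assumes odd_m: "odd m" and cardq: "card (UNIV::'a set) = 2^(3*m)" and two: "(2::'a) = 0"
    and T_def: "T = trace8 m"
begin

lemma q8: "card (UNIV::'a set) = 8^m"
  using cardq by (simp add: power_mult)

lemma frobq: "(x::'a)^(8^m) = x"
  using fermat_fin[OF q8] .

lemma m_pos: "m \<ge> 1" using odd_m by (cases m) auto

lemma T_add: "T (x+y) = T x + T y"
  unfolding T_def trace8_def by (simp add: c2_pow8[OF two] sum.distrib)

lemma T_zero: "T 0 = 0"
  unfolding T_def trace8_def by (simp add: zero_power)

lemma T_sq: "T (x^2) = (T x)^2"
  unfolding T_def trace8_def
  by (simp add: c2_pow2_sum[OF two] power_mult[symmetric] mult.commute)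

lemma F8_pow: "(c::'a)^8 = c \<Longrightarrow> c^(8^j) = c"
proof (induction j)
  case 0 then show ?case by simp
next
  case (Suc j)
  have "c^(8^Suc j) = (c^(8^j))^8" by (simp add: power_mult[symmetric] mult.commute)
  then show ?case using Suc by simp
qed

lemma T_smul: "(c::'a)^8 = c \<Longrightarrow> T (c*w) = c * T w"
  unfolding T_def trace8_def by (simp add: power_mult_distrib F8_pow sum_distrib_left)

lemma T_const: "(c::'a)^8 = c \<Longrightarrow> T c = c"
  unfolding T_def trace8_def using c2_odd[OF two odd_m] by (simp add: F8_pow)

lemma T_in: "(T w)^8 = T w"
proof -
  have "(T w)^8 = (T w)^(8^1)" by simp
  also have "\<dots> = (\<Sum>j<m. w^(8^Suc j))"
    unfolding T_def trace8_def c2_pow8_sum[OF two] by (simp add: power_mult[symmetric] mult.commute)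
  also have "\<dots> = (\<Sum>j<m. w^(8^j))"
  proof -
    have "(\<Sum>j<Suc m. w^(8^j)) = w^(8^0) + (\<Sum>j<m. w^(8^Suc j))"
      by (rule sum.lessThan_Suc_shift)
    moreover have "(\<Sum>j<Suc m. w^(8^j)) = (\<Sum>j<m. w^(8^j)) + w^(8^m)"
      by simp
    ultimately show ?thesis using frobq[of w] by (simp add: add.commute)
  qed
  finally show ?thesis unfolding T_def trace8_def .
qed

lemma F8_add: "(c::'a)^8 = c \<Longrightarrow> d^8 = d \<Longrightarrow> (c+d)^8 = c + d"
  using c2_pow8[OF two, of c d 1] by simp

lemma F8_mult: "(c::'a)^8 = c \<Longrightarrow> d^8 = d \<Longrightarrow> (c*d)^8 = c * d"
  by (simp add: power_mult_distrib)

lemma F8_power: "(c::'a)^8 = c \<Longrightarrow> (c^n)^8 = c^n"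
  by (metis power_mult mult.commute)

lemma expand: "((y::'a)+e)^3 + (y+e)^6 = (y^3 + y^6) + e*y^2 + e^2*y + e^3 + e^2*y^4 + e^4*y^2 + e^6"
proof -
  have "(y+e)^3 + (y+e)^6 = (y^3 + y^6) + e*y^2 + e^2*y + e^3 + e^2*y^4 + e^4*y^2 + e^6
     + 2 * (y^2*e + y*e^2 + 3*y^5*e + 7*y^4*e^2 + 10*y^3*e^3 + 7*y^2*e^4 + 3*y*e^5)"
    by algebra
  thus ?thesis using two by simp
qed

lemma key: assumes "T y0 = 0" "(e::'a)^8 = e"
  shows "(y0+e) + T ((y0+e)^3 + (y0+e)^6) = y0 + T (y0^3+y0^6) + (e + e^3 + e^6)"
proof -
  have t2: "T (y0^2) = 0" using T_sq assms(1) by simp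
  have t4: "T (y0^4) = 0" using T_sq[of "y0^2"] t2 by (simp add: power_mult[symmetric])
  have "T ((y0+e)^3 + (y0+e)^6) = T (y0^3 + y0^6) + e*T(y0^2) + e^2*T y0 + T(e^3) + e^2*T(y0^4) + e^4 * T(y0^2) + T (e^6)"
    unfolding expand T_add using assms(2)
    by (simp add: T_smul[OF F8_power[OF assms(2)]] T_smul[OF assms(2)])
  also have "\<dots> = T (y0^3 + y0^6) + e^3 + e^6"
    using t2 t4 assms by (simp add: T_const[OF F8_power[OF assms(2)]])
  finally show ?thesis by (simp add: algebra_simps)
qed


lemma c2e: "((a::'a) + b = c) = (a = c + b)"
  using c2_diff[OF two, of c b] by (metis eq_diff_eq)

lemma c2s: "(a::'a) + a = 0" by (rule c2_add_self[OF two])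

lemma c2c: "(a::'a) + (a + b) = b" by (metis add.assoc add_0 c2s)

definition F8 :: "'a set" where "F8 = {c. c^8 = c}"
definition K :: "'a set" where "K = {y. T y = 0}"
definition g :: "'a \<Rightarrow> 'a" where "g z = z + T (z^3 + z^6)"
definition Bf :: "'a \<Rightarrow> 'a" where "Bf y = T y + T ((y + T y)^3 + (y + T y)^6)"
definition Q :: "'a \<Rightarrow> 'a" where "Q e = e + e^3 + e^6"
definition tt :: "'a \<Rightarrow> 'a" where "tt e = e + e^2 + e^4"

lemma Bf_F8: "Bf y \<in> F8"
  unfolding Bf_def F8_def by (simp add: F8_add T_in)

lemma fiber_g: "card {z. g z = y} = card {e \<in> F8. Q e = Bf y}"
proof -
  define s where "s = T y"
  define y0 where "y0 = y + s"
  define A0 where "A0 = T (y0^3 + y0^6)"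
  have s8: "s^8 = s" unfolding s_def by (rule T_in)
  have Ty0: "T y0 = 0" unfolding y0_def s_def T_add T_const[OF T_in] by (rule c2s)
  have B: "Bf y = s + A0" unfolding Bf_def A0_def y0_def s_def ..
  have keyy: "g (y0 + e) = y0 + A0 + Q e" if "e^8 = e" for e
    unfolding g_def A0_def Q_def using key[OF Ty0 that] by (simp add: add.assoc)
  have eq: "{z. g z = y} = (\<lambda>e. y0 + e) ` {e \<in> F8. Q e = Bf y}"
  proof (intro set_eqI iffI)
    fix z assume "z \<in> {z. g z = y}"
    hence gz: "z + T (z^3 + z^6) = y" unfolding g_def by simp
    define e where "e = z + y0"
    have "T (z^3 + z^6) = y + z" using gz by (metis c2e add.commute)
    hence "e = T (z^3 + z^6) + s" unfolding e_def y0_def by (simp add: add.assoc add.commute add.left_commute)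
    hence e8: "e^8 = e" using F8_add[OF T_in s8] by simp
    have ze: "z = y0 + e" unfolding e_def by (simp add: add.commute c2c)
    have "y0 + A0 + Q e = y0 + s" using keyy[OF e8] gz ze y0_def unfolding g_def by (simp add: two)
    hence "A0 + Q e = s" by (simp add: add.assoc)
    hence "Q e = Bf y" unfolding B by (metis c2e add.commute)
    thus "z \<in> (\<lambda>e. y0 + e) ` {e \<in> F8. Q e = Bf y}" using ze e8 unfolding F8_def by blast
  next
    fix z assume "z \<in> (\<lambda>e. y0 + e) ` {e \<in> F8. Q e = Bf y}"
    then obtain e where e: "e^8 = e" "Q e = s + A0" "z = y0 + e" unfolding F8_def B by blast
    have "g z = y0 + (A0 + (A0 + s))" using keyy[OF e(1)] e by (simp add: add.assoc add.commute)
    also have "\<dots> = y + (s + s)" unfolding c2c y0_def by (simp add: add.assoc)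
    finally show "z \<in> {z. g z = y}" by (simp add: c2s)
  qed
  show ?thesis unfolding eq by (rule card_image) (simp add: inj_on_def)
qed

lemma T_K_F8: "y0 \<in> K \<Longrightarrow> s \<in> F8 \<Longrightarrow> T (y0 + s) = s"
  unfolding K_def F8_def by (simp add: T_add T_const)

lemma Bf_K_F8: "y0 \<in> K \<Longrightarrow> s \<in> F8 \<Longrightarrow> Bf (y0 + s) = s + T (y0^3 + y0^6)"
  unfolding Bf_def T_K_F8 by (simp add: add.assoc c2s)

lemma count_B: assumes "S \<subseteq> F8" shows "card {y. Bf y \<in> S} = card K * card S"
proof -
  let ?f = "\<lambda>y. (y + T y, Bf y)"
  let ?f' = "\<lambda>(y0,v). y0 + (v + T (y0^3 + y0^6))"
  have bij: "bij_betw ?f {y. Bf y \<in> S} (K \<times> S)"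
  proof (rule bij_betw_byWitness)
    show "\<forall>a\<in>{y. Bf y \<in> S}. ?f' (?f a) = a"
    proof
      fix y assume "y \<in> {y. Bf y \<in> S}"
      show "?f' (?f y) = y" unfolding Bf_def by (simp add: c2c add.assoc two)
    qed
    show "\<forall>a'\<in>K \<times> S. ?f (?f' a') = a'"
    proof
      fix p assume p: "p \<in> K \<times> S"
      obtain y0 v where pv: "p = (y0, v)" by (cases p)
      have y0: "y0 \<in> K" and v: "v \<in> F8" using p pv assms by auto
      have sF: "v + T (y0^3 + y0^6) \<in> F8" using v unfolding F8_def by (simp add: F8_add T_in)
      show "?f (?f' p) = p" unfolding pv
        using T_K_F8[OF y0 sF] Bf_K_F8[OF y0 sF] by (simp add: add.assoc c2s)
    qed
    show "?f ` {y. Bf y \<in> S} \<subseteq> K \<times> S"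
      unfolding K_def by (auto simp: T_add T_const[OF T_in] c2s)
    show "?f' ` (K \<times> S) \<subseteq> {y. Bf y \<in> S}"
    proof
      fix z assume "z \<in> ?f' ` (K \<times> S)"
      then obtain y0 v where y0: "y0 \<in> K" and vS: "v \<in> S" and z: "z = y0 + (v + T (y0^3 + y0^6))" by auto
      have v: "v \<in> F8" using vS assms by auto
      have sF: "v + T (y0^3 + y0^6) \<in> F8" using v unfolding F8_def by (simp add: F8_add T_in)
      show "z \<in> {y. Bf y \<in> S}" unfolding z using Bf_K_F8[OF y0 sF] vS by (simp add: add.assoc c2s)
    qed
  qed
  show ?thesis using bij_betw_same_card[OF bij] by (simp add: card_cartesian_product)
qed

lemma card_split: "card (UNIV::'a set) = card K * card F8"
proof -
  have "{y. Bf y \<in> F8} = UNIV" using Bf_F8 by auto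
  thus ?thesis using count_B[of F8] by simp
qed

lemma card_F8_le: "card F8 \<le> 8"
proof -
  let ?p = "monom (1::'a) 8 + [:0,1:]"
  have d: "degree ?p = 8" by (subst degree_add_eq_left) (auto simp: degree_monom_eq)
  have "F8 = {x. poly ?p x = 0}"
    unfolding F8_def by (auto simp: poly_monom c2e c2_minus[OF two])
  moreover have "?p \<noteq> 0" using d by auto
  ultimately show ?thesis using card_poly_roots_bound[of ?p] d by simp
qed

lemma card_K_le: "card K \<le> 8^(m-1)"
proof -
  obtain n where mn: "m = Suc n" using m_pos by (cases m) auto
  let ?r = "\<Sum>j<n. monom (1::'a) (8^j)"
  let ?p = "monom (1::'a) (8^n) + ?r"
  have dr: "degree ?r < 8^n"
    by (rule degree_sum_less) (auto simp: degree_monom_eq)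
  have d: "degree ?p = 8^n" using dr by (subst degree_add_eq_left) (auto simp: degree_monom_eq)
  have "K = {x. poly ?p x = 0}"
    unfolding K_def unfolding T_def trace8_def mn by (simp add: poly_sum poly_monom add.commute)
  moreover have "?p \<noteq> 0"
  proof
    assume "?p = 0"
    hence "degree ?p = 0" by simp
    thus False using d by simp
  qed
  ultimately show ?thesis using card_poly_roots_bound[of ?p] d mn by simp
qed

lemma card_F8: "card F8 = 8" and card_K: "card K = 8^(m-1)"
proof -
  obtain n where mn: "m = Suc n" using m_pos by (cases m) auto
  have eq: "card K * card F8 = 8^n * 8"
    using card_split q8 mn by (simp add: power_Suc2)
  have a: "card F8 \<le> 8" by (rule card_F8_le)
  have b: "card K \<le> 8^n" using card_K_le mn by simp
  have "card F8 = 8"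
  proof (rule ccontr)
    assume "card F8 \<noteq> 8"
    hence lt: "card F8 < 8" using a by simp
    have "card K * card F8 \<le> 8^n * card F8" using b by (rule mult_le_mono1)
    also have "\<dots> < 8^n * 8" using lt by simp
    finally show False using eq by simp
  qed
  thus "card F8 = 8" .
  thus "card K = 8^(m-1)" using eq mn by simp
qed

lemma tt_add: "tt (c + d) = tt c + tt d"
proof -
  have "(c+d)^4 = c^4 + d^4" using c2_pow2k[OF two, of c d 2] by simp
  thus ?thesis unfolding tt_def by (simp add: c2_sq[OF two] algebra_simps)
qed

lemma tt_one: "tt 1 = 1" unfolding tt_def by (simp add: c2s)

lemma tt_sq: "c \<in> F8 \<Longrightarrow> tt (c^2) = tt c"
  unfolding tt_def F8_def by (simp add: power_mult[symmetric] algebra_simps)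

lemma tt_01: assumes "c \<in> F8" shows "tt c = 0 \<or> tt c = 1"
proof -
  have "(tt c)^2 = c^2 + c^4 + c^8" unfolding tt_def
    by (simp add: c2_sq[OF two] power_mult[symmetric])
  also have "\<dots> = tt c" using assms unfolding tt_def F8_def by (simp add: algebra_simps)
  finally have "tt c * (tt c - 1) = 0" by (simp add: power2_eq_square algebra_simps)
  thus ?thesis by auto
qed

lemma tt_F8: "c \<in> F8 \<Longrightarrow> tt c \<in> F8"
  using tt_01 unfolding F8_def by fastforce

lemma sq_inj: "(e::'a)^2 = d^2 \<Longrightarrow> e = d"
proof -
  assume h: "e^2 = d^2"
  have "(e + d)^2 = 0" unfolding c2_sq[OF two] h by (rule c2s)
  hence "e + d = 0" by simp
  thus "e = d" by (metis c2e add_0)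
qed

lemma Q_id: "Q e = e^2 + tt e * (1 + e^2)"
proof -
  have "Q e + 2 * (e^2 + e^4) = e^2 + tt e * (1 + e^2)" unfolding Q_def tt_def by algebra
  thus ?thesis using two by simp
qed

lemma Q_cases: "Q e = (if tt e = 1 then 1 else if tt e = 0 then e^2 else Q e)"
  using Q_id[of e] by (auto simp: c2c two)

definition Z :: "'a set" where "Z = {e \<in> F8. tt e = 0}"

lemma card_Z: "card Z = 4" and card_Z1: "card {e \<in> F8. tt e = 1} = 4"
proof -
  let ?Z1 = "{e \<in> F8. tt e = 1}"
  have one: "(1::'a) \<in> F8" unfolding F8_def by simp
  have img: "?Z1 = (\<lambda>e. e + 1) ` Z"
  proof (intro set_eqI iffI)
    fix e assume e: "e \<in> ?Z1"
    have "e + 1 \<in> Z" using e one unfolding Z_def by (auto simp: tt_add tt_one c2s F8_def F8_add)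
    moreover have "e = (e + 1) + 1" by (simp add: add.assoc c2s)
    ultimately show "e \<in> (\<lambda>e. e + 1) ` Z" by blast
  next
    fix e assume "e \<in> (\<lambda>e. e + 1) ` Z"
    then obtain d where d: "d \<in> Z" "e = d + 1" by blast
    thus "e \<in> ?Z1" using one unfolding Z_def by (auto simp: tt_add tt_one F8_def F8_add)
  qed
  have c1: "card ?Z1 = card Z" unfolding img by (rule card_image) (simp add: inj_on_def)
  have "F8 = Z \<union> ?Z1" unfolding Z_def using tt_01 by auto
  moreover have "Z \<inter> ?Z1 = {}" unfolding Z_def by auto
  ultimately have "card F8 = card Z + card ?Z1" by (metis card_Un_disjoint finite)
  hence "card Z = 4" using c1 card_F8 by simp
  thus "card Z = 4" .
  thus "card ?Z1 = 4" using c1 by simp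
qed

definition phi :: "'a \<Rightarrow> nat" where
  "phi v = (if v = 1 then 4 else if tt v = 0 then 1 else 0)"

lemma fiber_Q: assumes v: "v \<in> F8" shows "card {e \<in> F8. Q e = v} = phi v"
proof (cases "v = 1")
  case True
  have "{e \<in> F8. Q e = v} = {e \<in> F8. tt e = 1}"
  proof (intro set_eqI iffI)
    fix e assume e: "e \<in> {e \<in> F8. Q e = v}"
    show "e \<in> {e \<in> F8. tt e = 1}"
    proof (cases "tt e = 1")
      case False
      hence "tt e = 0" using tt_01 e by blast
      hence "e^2 = 1^2" using e True Q_id[of e] by simp
      hence "e = 1" by (rule sq_inj)
      thus ?thesis using tt_one e by simp
    qed (use e in auto)
  next
    fix e assume "e \<in> {e \<in> F8. tt e = 1}"
    thus "e \<in> {e \<in> F8. Q e = v}" using True Q_id[of e] by (simp add: c2c two)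
  qed
  thus ?thesis using card_Z1 True unfolding phi_def by simp
next
  case F: False
  show ?thesis
  proof (cases "tt v = 0")
    case True
    have v4: "v^4 \<in> F8" unfolding F8_def mem_Collect_eq
      by (rule F8_power) (use v in \<open>simp add: F8_def\<close>)
    have v2: "v^2 \<in> F8" unfolding F8_def mem_Collect_eq
      by (rule F8_power) (use v in \<open>simp add: F8_def\<close>)
    have "tt (v^4) = tt ((v^2)^2)" by (simp add: power_mult[symmetric])
    also have "\<dots> = tt (v^2)" by (rule tt_sq[OF v2])
    also have "\<dots> = tt v" by (rule tt_sq[OF v])
    finally have tv4: "tt (v^4) = 0" using True by simp
    have "{e \<in> F8. Q e = v} = {v^4}"
    proof (intro set_eqI iffI)
      fix e assume e: "e \<in> {e \<in> F8. Q e = v}"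
      have "tt e \<noteq> 1" using e F Q_id[of e] by (auto simp: c2c two)
      hence "tt e = 0" using tt_01 e by blast
      hence "e^2 = (v^4)^2" using e Q_id[of e] v unfolding F8_def by (simp add: power_mult[symmetric])
      thus "e \<in> {v^4}" using sq_inj by simp
    next
      fix e assume "e \<in> {v^4}"
      thus "e \<in> {e \<in> F8. Q e = v}" using v4 tv4 Q_id[of "v^4"] v
        unfolding F8_def by (simp add: power_mult[symmetric])
    qed
    thus ?thesis using F True unfolding phi_def by simp
  next
    case False
    have "{e \<in> F8. Q e = v} = {}"
    proof (intro set_eqI iffI)
      fix e assume e: "e \<in> {e \<in> F8. Q e = v}"
      have "tt e \<noteq> 1" using e F Q_id[of e] by (auto simp: c2c two)
      hence "tt e = 0" using tt_01 e by blast
      hence "v = e^2" using e Q_id[of e] by simp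
      hence "tt v = 0" using tt_sq e \<open>tt e = 0\<close> by simp
      thus "e \<in> {}" using False by simp
    qed simp
    thus ?thesis using F False unfolding phi_def by simp
  qed
qed

lemma Mg: "card {y. card {z. g z = y} = r} = card K * card {v \<in> F8. phi v = r}"
proof -
  have "{y. card {z. g z = y} = r} = {y. Bf y \<in> {v \<in> F8. phi v = r}}"
    using fiber_g fiber_Q Bf_F8 by auto
  thus ?thesis using count_B[of "{v \<in> F8. phi v = r}"] by auto
qed

lemma range_g: "card (range g) = card K * 5"
proof -
  have "range g = {y. card {z. g z = y} \<noteq> 0}" by auto
  also have "\<dots> = {y. Bf y \<in> {v \<in> F8. phi v \<noteq> 0}}"
    using fiber_g fiber_Q Bf_F8 by auto
  finally have r: "card (range g) = card K * card {v \<in> F8. phi v \<noteq> 0}"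
    using count_B[of "{v \<in> F8. phi v \<noteq> 0}"] by auto
  have "{v \<in> F8. phi v \<noteq> 0} = insert 1 Z"
    unfolding phi_def Z_def F8_def by auto
  moreover have "1 \<notin> Z" unfolding Z_def using tt_one by simp
  ultimately have "card {v \<in> F8. phi v \<noteq> 0} = 5" using card_Z by (simp add: card_insert_if)
  thus ?thesis using r by simp
qed

lemma M1: "card {v \<in> F8. phi v = 1} = 4"
proof -
  have "{v \<in> F8. phi v = 1} = Z" unfolding phi_def Z_def using tt_one by auto
  thus ?thesis using card_Z by simp
qed

lemma M4: "card {v \<in> F8. phi v = 4} = 1"
proof -
  have "{v \<in> F8. phi v = 4} = {1}" unfolding phi_def F8_def by auto
  thus ?thesis by simp
qed

lemma Mr: "r \<noteq> 1 \<Longrightarrow> r \<noteq> 4 \<Longrightarrow> r \<noteq> 0 \<Longrightarrow> card {v \<in> F8. phi v = r} = 0"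
proof -
  assume "r \<noteq> 1" "r \<noteq> 4" "r \<noteq> 0"
  hence "{v \<in> F8. phi v = r} = {}" unfolding phi_def by auto
  thus ?thesis by simp
qed
end



context P54 begin
lemma cube_inj: "inj (\<lambda>x::'a. x^3)"
proof -
  obtain n where mn: "m = 2*n+1" using odd_m oddE by blast
  have m3: "(8::nat)^(2*j+1) mod 3 = 2" for j
  proof (induction j)
    case 0 then show ?case by simp
  next
    case (Suc j)
    have e: "(8::nat)^(2*Suc j+1) = 3*(21*8^(2*j+1)) + 8^(2*j+1)" by simp
    have g: "(3*c + A) mod 3 = A mod 3" for c A :: nat by simp
    show ?case unfolding e g by (rule Suc.IH)
  qed
  obtain X where X: "X = (8::nat)^m" by blast
  have "X mod 3 = 2" using m3[of n] mn X by simp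
  hence "3 dvd 2 * X - 1" by presburger
  then obtain k where k: "2 * (8::nat)^m - 1 = 3*k" using X by blast
  have qp: "(8::nat)^m \<ge> 1" by simp
  have inv: "((x::'a)^3)^k = x" for x
  proof -
    have ex: "2 * (8::nat)^m - 1 = 8^m + (8^m - 1)" using qp by simp
    have s1: "(8::nat)^m = Suc (8^m - 1)" using qp by simp
    have "((x::'a)^3)^k = x^(3*k)" by (simp add: power_mult)
    also have "\<dots> = x^(8^m + (8^m - 1))" unfolding k[symmetric] ex ..
    also have "\<dots> = x * x^(8^m - 1)" by (simp only: power_add frobq)
    also have "\<dots> = x^(Suc (8^m - 1))" by (simp only: power_Suc)
    also have "\<dots> = x" unfolding s1[symmetric] by (rule frobq)
    finally show ?thesis .
  qed
  show ?thesis by (rule inj_on_inverseI[of _ "\<lambda>y. y^k"]) (simp add: inv)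
qed
end

lemma conj_count:
  fixes G k h :: "'a::finite \<Rightarrow> 'a"
  assumes k: "inj k" and h: "inj h"
  shows "card {y. card {x. h (G (k x)) = y} = r} = card {w. card {z. G z = w} = r}"
    and "card (range (\<lambda>x. h (G (k x)))) = card (range G)"
proof -
  have sk: "surj k" using k finite_UNIV_inj_surj[of k] by simp
  have sh: "surj h" using h finite_UNIV_inj_surj[of h] by simp
  have bh: "bij h" using h sh bij_def by blast
  have ih: "inj (inv h)" using bh bij_imp_bij_inv bij_is_inj by blast
  have sih: "surj (inv h)" using bh bij_imp_bij_inv bij_is_surj by blast
  have fib: "card {x. h (G (k x)) = y} = card {z. G z = inv h y}" for y
  proof -
    have e: "{x. h (G (k x)) = y} = k -` {z. G z = inv h y}"
      using bh by (auto simp: bij_inv_eq_iff)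
    show ?thesis unfolding e by (rule card_vimage_inj[OF k]) (use sk in auto)
  qed
  have e2: "{y. card {x. h (G (k x)) = y} = r} = inv h -` {w. card {z. G z = w} = r}"
    using fib by auto
  show "card {y. card {x. h (G (k x)) = y} = r} = card {w. card {z. G z = w} = r}"
    unfolding e2 by (rule card_vimage_inj[OF ih]) (use sih in auto)
  have "range (\<lambda>x. h (G (k x))) = h ` range G"
  proof -
    have "range (\<lambda>x. h (G (k x))) = h ` (G ` (k ` UNIV))" by (simp add: image_image)
    thus ?thesis using sk by simp
  qed
  thus "card (range (\<lambda>x. h (G (k x)))) = card (range G)"
    using card_image[OF inj_on_subset[OF h]] by simp
qed

theorem proposition5p4:
  fixes m :: nat and a :: "'a::{field,finite}"
  assumes "odd m"
    and "card (UNIV :: 'a set) = 2 ^ (3 * m)"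
    and "(2::'a) = 0"
    and "a \<noteq> 0"
  defines "f \<equiv> (\<lambda>x::'a. x ^ 3 + inverse a * trace8 m (a ^ 3 * x ^ 9 + a ^ 6 * x ^ 18))"
  shows "Mcount 1 f = 2 ^ (3 * m - 1)
       \<and> Mcount 4 f = 2 ^ (3 * m - 3)
       \<and> (\<forall>r. r \<ge> 1 \<and> r \<noteq> 1 \<and> r \<noteq> 4 \<longrightarrow> Mcount r f = 0)
       \<and> card (range f) = 5 * 2 ^ (3 * m - 3)"
proof -
  interpret P: P54 m "trace8 m :: 'a \<Rightarrow> 'a"
    by unfold_locales (use assms in auto)
  have fg: "f = (\<lambda>x. inverse a * P.g (a * x^3))"
  proof
    fix x
    have e1: "(a*x^3)^3 = a^3*x^9" and e2: "(a*x^3)^6 = a^6*x^18"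
      by (simp_all add: power_mult_distrib power_mult[symmetric])
    show "f x = inverse a * P.g (a * x^3)"
      unfolding f_def P.g_def e1 e2 using assms(4) by (simp add: distrib_left)
  qed
  have ik: "inj (\<lambda>x::'a. a * x^3)"
    using P.cube_inj assms(4) by (simp add: inj_on_def)
  have ih: "inj (\<lambda>w::'a. inverse a * w)"
    using assms(4) by (simp add: inj_on_def)
  have Mf: "Mcount r f = card P.K * card {v \<in> P.F8. P.phi v = r}" for r
    unfolding Mcount_def fg conj_count(1)[OF ik ih, of P.g] P.Mg ..
  have Rf: "card (range f) = card P.K * 5"
    unfolding fg conj_count(2)[OF ik ih, of P.g] P.range_g ..
  have m1: "m \<ge> 1" by (rule P.m_pos)
  have K: "card P.K = 2^(3*m-3)"
  proof -
    have "(8::nat)^(m-1) = 2^(3*(m-1))" by (simp add: power_mult)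
    moreover have "3*(m-1) = 3*m-3" by simp
    ultimately show ?thesis unfolding P.card_K by simp
  qed
  have p1: "(2::nat)^(3*m-1) = 2^(3*m-3) * 4"
  proof -
    have "3*m-1 = (3*m-3) + 2" using m1 by simp
    thus ?thesis by (simp add: power_add)
  qed
  show ?thesis
    using Mf Rf K p1 P.M1 P.M4 P.Mr by auto
qed

end
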